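(* Let $n\ge 4$ and consider the Markov chain on $\{0,1,\dots,n-1\}$ with $n\times n$ transition probability matrix $\mathbf P=(P_{ij})$ given by: $P_{00}=5/6$, $P_{01}=1/6$; $P_{10}=5/6$, $P_{12}=1/6$; for $2\le i\le n-3$: $P_{i0}=2/3$, $P_{i,i-1}=1/6$, $P_{i,i+1}=1/6$; $P_{n-2,0}=16/21$, $P_{n-2,n-3}=1/6$, $P_{n-2,n-1}=1/14$; $P_{n-1,0}=1/3$, $P_{n-1,n-2}=1/6$, $P_{n-1,n-1}=1/2$; all other entries $0$. Then the steady state probability vector $\vec\pi=(\pi_0,\dots,\pi_{n-1})$ (the unique probability vector with $\vec\pi=\vec\pi\mathbf P$) is $$\vec\pi=\left(\frac{c_n}{\sum_{l=1}^n c_l},\frac{c_{n-1}}{\sum_{l=1}^n c_l},\dots,\frac{c_1}{\sum_{l=1}^n c_l}\right),$$ i.e. $\pi_i=c_{n-i}/\sum_{l=1}^n c_l$ for $i=0,\dots,n-1$.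
   Context: The cobalancing numbers are $b_0=0$, $b_1=0$, $b_{m+1}=6b_m-b_{m-1}+2$ (so $b_2=2$, $b_3=14$). The Lucas-cobalancing numbers are $c_m=\sqrt{8b_m^2+8b_m+1}$ for $m\ge1$; thus $c_1=1$, $c_2=7$, $c_3=41$, and $c_{m+1}=6c_m-c_{m-1}$. *)

theory Defs
  imports Complex_Main
begin

fun cobal :: "nat \<Rightarrow> int" where
  "cobal 0 = 0"
| "cobal (Suc 0) = 0"
| "cobal (Suc (Suc m)) = 6 * cobal (Suc m) - cobal m + 2"

definition lucas_cobal :: "nat \<Rightarrow> real" where
  "lucas_cobal m = sqrt (8 * (real_of_int (cobal m))^2 + 8 * real_of_int (cobal m) + 1)"

definition Pmat :: "nat \<Rightarrow> nat \<Rightarrow> nat \<Rightarrow> real" where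
  "Pmat n i j =
    (if i = 0 then (if j = 0 then 5/6 else if j = 1 then 1/6 else 0)
     else if i = 1 then (if j = 0 then 5/6 else if j = 2 then 1/6 else 0)
     else if 2 \<le> i \<and> i \<le> n - 3 then
       (if j = 0 then 2/3 else if j = i - 1 then 1/6 else if j = i + 1 then 1/6 else 0)
     else if i = n - 2 then
       (if j = 0 then 16/21 else if j = n - 3 then 1/6 else if j = n - 1 then 1/14 else 0)
     else if i = n - 1 then
       (if j = 0 then 1/3 else if j = n - 2 then 1/6 else if j = n - 1 then 1/2 else 0)
     else 0)"

definition stationary_prob :: "nat \<Rightarrow> (nat \<Rightarrow> nat \<Rightarrow> real) \<Rightarrow> (nat \<Rightarrow> real) \<Rightarrow> bool" where
  "stationary_prob n P \<pi> \<longleftrightarrow>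
     (\<forall>i<n. 0 \<le> \<pi> i) \<and> (\<Sum>i<n. \<pi> i) = 1 \<and>
     (\<forall>j<n. \<pi> j = (\<Sum>i<n. \<pi> i * P i j))"

end

theory Submission
  imports Defs
begin

fun cr :: "nat \<Rightarrow> real" where
  "cr 0 = -1"
| "cr (Suc 0) = 1"
| "cr (Suc (Suc m)) = 6 * cr (Suc m) - cr m"

lemma lin_rel:
  "real_of_int (cobal (Suc m)) = 3 * cobal m + cr m + 1 \<and> cr (Suc m) = 8 * cobal m + 3 * cr m + 4"
proof -
  have "(real_of_int (cobal (Suc m)) = 3 * cobal m + cr m + 1 \<and> cr (Suc m) = 8 * cobal m + 3 * cr m + 4) \<and>
        (real_of_int (cobal (Suc (Suc m))) = 3 * cobal (Suc m) + cr (Suc m) + 1 \<and> cr (Suc (Suc m)) = 8 * cobal (Suc m) + 3 * cr (Suc m) + 4)"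
  proof (induction m)
    case 0
    then show ?case by simp
  next
    case (Suc m)
    then show ?case by simp
  qed
  then show ?thesis by blast
qed

lemma quad: "(cr m)^2 = 8 * (real_of_int (cobal m))^2 + 8 * real_of_int (cobal m) + 1"
proof (induction m)
  case 0
  then show ?case by simp
next
  case (Suc m)
  have "real_of_int (cobal (Suc m)) = 3 * cobal m + cr m + 1" "cr (Suc m) = 8 * cobal m + 3 * cr m + 4"
    using lin_rel by blast+
  then show ?case using Suc by (simp add: power2_eq_square algebra_simps)
qed

lemma cr_pos: "0 < cr (Suc m) \<and> cr (Suc m) \<le> cr (Suc (Suc m))"
  by (induction m) auto

lemma lc_eq: "m \<ge> 1 \<Longrightarrow> lucas_cobal m = cr m"
proof -
  assume "m \<ge> 1"
  then obtain k where k: "m = Suc k" by (cases m) auto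
  have "cr m > 0" using cr_pos k by blast
  then show ?thesis unfolding lucas_cobal_def using quad[of m, symmetric] by simp
qed

lemma sum_rev: fixes n :: nat shows "(\<Sum>i<n. f (n - i)) = (\<Sum>l=1..n. (f l :: real))"
proof (induction n)
  case 0
  then show ?case by simp
next
  case (Suc n)
  have "(\<Sum>i<Suc n. f (Suc n - i)) = f (Suc n) + (\<Sum>i<n. f (Suc n - Suc i))"
    by (subst sum.lessThan_Suc_shift) simp
  also have "\<dots> = f (Suc n) + (\<Sum>l=1..n. f l)" using Suc by simp
  finally show ?case by simp
qed

lemma P_col:
  assumes "n \<ge> 4" "i < n" "1 \<le> j" "j < n"
  shows "Pmat n i j = (if i + 1 = j then (if j = n - 1 then 1/14 else 1/6) else 0)
     + (if i = j + 1 then 1/6 else 0) + (if i = j \<and> j = n - 1 then 1/2 else 0)"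
proof -
  obtain m where m: "n = m + 4" using assms(1) by (metis add.commute le_Suc_ex)
  have e: "n - 1 = m + 3" "n - 2 = m + 2" "n - 3 = m + 1" using m by auto
  consider "i = 0" | "i = 1" | "2 \<le> i \<and> i \<le> m + 1" | "i = m + 2" | "i = m + 3" using assms m by linarith
  then show ?thesis
  proof cases
    case 1
    have "Pmat n i j = (if j = 1 then 1/6 else 0)" using 1 assms by (simp add: Pmat_def)
    then show ?thesis using 1 assms e by auto
  next
    case 2
    have "Pmat n i j = (if j = 2 then 1/6 else 0)" using 2 assms by (simp add: Pmat_def)
    then show ?thesis using 2 assms e by auto
  next
    case 3
    have "Pmat n i j = (if j = i - 1 then 1/6 else if j = i + 1 then 1/6 else 0)" using 3 assms e by (simp add: Pmat_def)
    then show ?thesis using 3 assms e by auto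
  next
    case 4
    have "Pmat n i j = (if j = m + 1 then 1/6 else if j = m + 3 then 1/14 else 0)" using 4 assms e by (simp add: Pmat_def)
    then show ?thesis using 4 assms e by auto
  next
    case 5
    have "Pmat n i j = (if j = m + 2 then 1/6 else if j = m + 3 then 1/2 else 0)" using 5 assms e by (simp add: Pmat_def)
    then show ?thesis using 5 assms e by auto
  qed
qed

lemma P0:
  assumes "n \<ge> 4" "i < n"
  shows "Pmat n i 0 = (if i \<le> 1 then 5/6 else if i \<le> n-3 then 2/3 else if i = n-2 then 16/21 else 1/3)"
  using assms unfolding Pmat_def by auto

lemma P_row:
  assumes "n \<ge> 4" "i < n"
  shows "(\<Sum>j<n. Pmat n i j) = 1"
proof -
  obtain m where m: "n = m + 4" using assms(1) by (metis add.commute le_Suc_ex)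
  have e: "n - 1 = m + 3" "n - 2 = m + 2" "n - 3 = m + 1" using m by auto
  have "(\<Sum>j<n. Pmat n i j) = Pmat n i 0 + (\<Sum>j\<in>{1..<n}. Pmat n i j)"
    using assms by (simp add: sum.atLeast_Suc_lessThan atLeast0LessThan[symmetric])
  also have "(\<Sum>j\<in>{1..<n}. Pmat n i j) = (\<Sum>j\<in>{1..<n}. (if j = i + 1 then (if j = n - 1 then 1/14 else 1/6) else 0)
     + (if j = i - 1 then (if 2 \<le> i then 1/6 else 0) else 0) + (if j = i then (if i = n - 1 then 1/2 else 0) else 0))"
    by (rule sum.cong) (use assms P_col in auto)
  also have "\<dots> = (if i + 1 < n then (if i + 1 = n - 1 then 1/14 else 1/6) else 0)
     + (if 2 \<le> i then 1/6 else 0) + (if i = n - 1 then 1/2 else 0)"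
    using assms by (simp add: sum.distrib sum.delta; presburger)
  finally have eq: "(\<Sum>j<n. Pmat n i j) = Pmat n i 0 + ((if i + 1 < n then (if i + 1 = n - 1 then 1/14 else 1/6) else 0)
     + (if 2 \<le> i then 1/6 else 0) + (if i = n - 1 then 1/2 else 0))" .
  consider "i = 0" | "i = 1" | "2 \<le> i \<and> i \<le> m + 1" | "i = m + 2" | "i = m + 3" using assms m by linarith
  then show ?thesis
  proof cases
    case 1 then show ?thesis using assms eq P0[OF assms] e m by simp
  next
    case 2 then show ?thesis using assms eq P0[OF assms] e m by simp
  next
    case 3 then show ?thesis using assms eq P0[OF assms] e m by simp
  next
    case 4 then show ?thesis using assms eq P0[OF assms] e m by simp
  next
    case 5 then show ?thesis using assms eq P0[OF assms] e m by simp
  qed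
qed

lemma col_sum:
  assumes "n \<ge> 4" "1 \<le> j" "j < n"
  shows "(\<Sum>i<n. \<pi> i * Pmat n i j) =
    (if j = n - 1 then \<pi> (n - 2) / 14 + \<pi> (n - 1) / 2 else \<pi> (j - 1) / 6 + \<pi> (j + 1) / 6)"
proof -
  have "j - 1 < n" using assms by auto
  have "(\<Sum>i<n. \<pi> i * Pmat n i j) = (\<Sum>i<n. (if i = j - 1 then \<pi> i * (if j = n - 1 then 1/14 else 1/6) else 0)
     + (if i = j + 1 then \<pi> i / 6 else 0) + (if i = j then (if j = n - 1 then \<pi> i / 2 else 0) else 0))"
    by (rule sum.cong) (use assms P_col in auto)
  also have "\<dots> = (if j - 1 < n then \<pi> (j - 1) * (if j = n - 1 then 1/14 else 1/6) else 0)
     + (if j + 1 < n then \<pi> (j + 1) / 6 else 0) + (if j = n - 1 then \<pi> j / 2 else 0)"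
    using assms \<open>j - 1 < n\<close> by (simp add: sum.distrib sum.delta)
  finally show ?thesis using assms by (cases "j = n - 1") (auto simp: numeral_2_eq_2)
qed

lemma col0:
  fixes \<pi> :: "nat \<Rightarrow> real"
  assumes "n \<ge> 4" "(\<Sum>i<n. \<pi> i) = 1" "\<And>j. 1 \<le> j \<Longrightarrow> j < n \<Longrightarrow> \<pi> j = (\<Sum>i<n. \<pi> i * Pmat n i j)"
  shows "\<pi> 0 = (\<Sum>i<n. \<pi> i * Pmat n i 0)"
proof -
  have "(\<Sum>j<n. \<Sum>i<n. \<pi> i * Pmat n i j) = (\<Sum>i<n. \<Sum>j<n. \<pi> i * Pmat n i j)"
    by (rule sum.swap)
  also have "\<dots> = (\<Sum>i<n. \<pi> i)"
    by (rule sum.cong) (use assms P_row in \<open>auto simp: sum_distrib_left[symmetric]\<close>)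
  finally have A: "(\<Sum>j<n. \<Sum>i<n. \<pi> i * Pmat n i j) = (\<Sum>i<n. \<pi> i)" .
  have split: "\<And>g :: nat \<Rightarrow> real. (\<Sum>j<n. g j) = g 0 + (\<Sum>j\<in>{1..<n}. g j)"
    using assms(1) by (simp add: sum.atLeast_Suc_lessThan atLeast0LessThan[symmetric])
  have "(\<Sum>j\<in>{1..<n}. \<Sum>i<n. \<pi> i * Pmat n i j) = (\<Sum>j\<in>{1..<n}. \<pi> j)"
    by (rule sum.cong) (use assms(3) in auto)
  then show ?thesis using A split[of "\<lambda>j. \<Sum>i<n. \<pi> i * Pmat n i j"] split[of \<pi>] by linarith
qed

theorem theorem3p3:
  fixes n :: nat
  assumes "n \<ge> 4"
  shows "\<forall>\<pi> :: nat \<Rightarrow> real. stationary_prob n (Pmat n) \<pi> \<longleftrightarrow>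
           (\<forall>i<n. \<pi> i = lucas_cobal (n - i) / (\<Sum>l=1..n. lucas_cobal l))"
proof (intro allI)
  fix \<pi> :: "nat \<Rightarrow> real"
  define S where "S = (\<Sum>l=1..n. cr l)"
  have lcS: "(\<Sum>l=1..n. lucas_cobal l) = S" unfolding S_def
    by (rule sum.cong) (auto simp: lc_eq)
  have lcn: "\<And>i. i < n \<Longrightarrow> lucas_cobal (n - i) = cr (n - i)" by (simp add: lc_eq)
  have crpos: "cr k > 0" if k1: "k \<ge> 1" for k
  proof -
    obtain m where "k = Suc m" using k1 by (cases k) auto
    then show ?thesis using cr_pos by blast
  qed
  have Spos: "S > 0" unfolding S_def
    by (rule sum_pos) (use assms crpos in auto)
  have Srev: "(\<Sum>i<n. cr (n - i)) = S" unfolding S_def by (rule sum_rev)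
  show "stationary_prob n (Pmat n) \<pi> \<longleftrightarrow> (\<forall>i<n. \<pi> i = lucas_cobal (n - i) / (\<Sum>l=1..n. lucas_cobal l))"
  proof
    assume st: "stationary_prob n (Pmat n) \<pi>"
    have sum1: "(\<Sum>i<n. \<pi> i) = 1" and cols: "\<And>j. j < n \<Longrightarrow> \<pi> j = (\<Sum>i<n. \<pi> i * Pmat n i j)"
      using st unfolding stationary_prob_def by auto
    define t where "t = \<pi> (n - 1)"
    have c2: "\<pi> (n - 2) = 7 * t"
    proof -
      have "\<pi> (n - 1) = \<pi> (n - 2) / 14 + \<pi> (n - 1) / 2"
        using cols[of "n - 1"] col_sum[OF assms, of "n - 1" \<pi>] assms by simp
      then show ?thesis unfolding t_def by simp
    qed
    have key: "k + 1 < n \<Longrightarrow> \<pi> (n - 1 - k) = cr (k + 1) * t \<and> \<pi> (n - 2 - k) = cr (k + 2) * t" for k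
    proof (induction k)
      case 0
      then show ?case using c2 by (simp add: t_def numeral_eq_Suc)
    next
      case (Suc k)
      then have IH: "\<pi> (n - 1 - k) = cr (k + 1) * t" "\<pi> (n - 2 - k) = cr (k + 2) * t" by auto
      define j where "j = n - 2 - k"
      have j: "1 \<le> j" "j < n" "j \<noteq> n - 1" "j - 1 = n - 1 - Suc (Suc k)" "j + 1 = n - 1 - k"
        "n - 1 - Suc k = j" using Suc.prems unfolding j_def by auto
      have "\<pi> j = \<pi> (j - 1) / 6 + \<pi> (j + 1) / 6"
        using cols[of j] col_sum[OF assms j(1,2), of \<pi>] j by simp
      then have "\<pi> (j - 1) = 6 * \<pi> j - \<pi> (j + 1)" by simp
      then have "\<pi> (j - 1) = cr (k + 3) * t" using IH j unfolding j_def
        by (simp add: algebra_simps numeral_eq_Suc)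
      then show ?case using IH j unfolding j_def by (simp add: numeral_eq_Suc)
    qed
    have all: "\<And>i. i < n \<Longrightarrow> \<pi> i = cr (n - i) * t"
    proof -
      fix i assume "i < n"
      then have "n - 1 - (n - 1 - i) = i" "n - 1 - i + 1 = n - i" "n - 1 - i + 1 < n \<or> n - 1 - i + 1 = n" by auto
      show "\<pi> i = cr (n - i) * t"
      proof (cases "i = 0")
        case True
        have "n - 2 + 1 < n" using assms by auto
        from key[OF this] have "\<pi> (n - 2 - (n - 2)) = cr (n - 2 + 2) * t" by blast
        moreover have e: "n - 2 + 2 = n" "n - 2 - (n - 2) = 0" using assms by auto
        ultimately show ?thesis using True by (simp only: e) simp
      next
        case False
        then have "n - 1 - i + 1 < n" using \<open>i < n\<close> by auto
        from key[OF this] have "\<pi> (n - 1 - (n - 1 - i)) = cr (n - 1 - i + 1) * t" by blast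
        then show ?thesis using \<open>i < n\<close> by (simp add: Suc_diff_Suc)
      qed
    qed
    have "1 = (\<Sum>i<n. cr (n - i) * t)" using sum1 all by simp
    also have "\<dots> = S * t" using Srev by (simp add: sum_distrib_right[symmetric])
    finally have "t = 1 / S" using Spos by (simp add: field_simps)
    then show "\<forall>i<n. \<pi> i = lucas_cobal (n - i) / (\<Sum>l=1..n. lucas_cobal l)"
      using all lcS lcn by simp
  next
    assume H: "\<forall>i<n. \<pi> i = lucas_cobal (n - i) / (\<Sum>l=1..n. lucas_cobal l)"
    have pv: "\<And>i. i < n \<Longrightarrow> \<pi> i = cr (n - i) / S" using H lcS lcn by simp
    have nn: "\<forall>i<n. 0 \<le> \<pi> i" using pv crpos Spos by (simp add: less_imp_le)
    have sum1: "(\<Sum>i<n. \<pi> i) = 1"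
    proof -
      have "(\<Sum>i<n. \<pi> i) = (\<Sum>i<n. cr (n - i) / S)" by (rule sum.cong) (auto simp: pv)
      also have "\<dots> = S / S" using Srev by (simp add: sum_divide_distrib[symmetric])
      finally show ?thesis using Spos by simp
    qed
    have colj: "\<pi> j = (\<Sum>i<n. \<pi> i * Pmat n i j)" if j: "1 \<le> j" "j < n" for j
    proof (cases "j = n - 1")
      case True
      have "n - 2 < n" "n - 1 < n" "n - (n - 2) = 2" "n - (n - 1) = 1" using assms by auto
      then show ?thesis using col_sum[OF assms j, of \<pi>] True pv[of "n - 2"] pv[of "n - 1"] pv[of j]
        by (simp add: numeral_eq_Suc field_simps)
    next
      case False
      then obtain k where k: "n - j = Suc k" "k \<ge> 1" using j by (metis Suc_diff_Suc diff_Suc_1 less_Suc_eq_le le_less_Suc_eq not_less_eq_eq Suc_pred le_numeral_extra(2) diff_diff_cancel less_imp_le_nat zero_less_diff)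
      have "n - (j - 1) = Suc (Suc k)" "n - (j + 1) = k" using k j by auto
      moreover have "j - 1 < n" "j + 1 < n" using j False by auto
      ultimately have v: "\<pi> (j - 1) = cr (Suc (Suc k)) / S" "\<pi> (j + 1) = cr k / S" "\<pi> j = cr (Suc k) / S"
        using pv[of "j - 1"] pv[of "j + 1"] pv[of j] k j by auto
      have cs: "(\<Sum>i<n. \<pi> i * Pmat n i j) = \<pi> (j - 1) / 6 + \<pi> (j + 1) / 6"
        using col_sum[OF assms j, of \<pi>] False by simp
      have rec: "cr (Suc (Suc k)) = 6 * cr (Suc k) - cr k" by simp
      show ?thesis unfolding cs v rec using Spos by (simp add: field_simps)
    qed
    have col0': "\<pi> 0 = (\<Sum>i<n. \<pi> i * Pmat n i 0)"
      by (rule col0[OF assms sum1]) (use colj in auto)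
    have "\<forall>j<n. \<pi> j = (\<Sum>i<n. \<pi> i * Pmat n i j)"
    proof (intro allI impI)
      fix j assume "j < n"
      then show "\<pi> j = (\<Sum>i<n. \<pi> i * Pmat n i j)" using colj col0' by (cases j) auto
    qed
    then show "stationary_prob n (Pmat n) \<pi>" unfolding stationary_prob_def using nn sum1 by simp
  qed
qed

end
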